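(* Let $R_0>0$, $r>0$, $V_T>0$ and $V_s>0$. Suppose evaders may initially be located anywhere in the closed disk of radius $R_0$, each evader moves with speed at most $V_T$ in any direction, and a single sweeper (or a line formation of sweepers) carries a line-segment sensor of total length $2r$ that moves with velocity $V_s$. If $$V_s<V_{LB}:=\frac{\pi R_0 V_T}{r},$$ then no sweeping process can successfully complete the confinement task.
   Context: An evader is detected as soon as its position lies on the sensor segment. At time $t$ the evader region is the set of all points at which an undetected evader could be at time $t$, that is, the endpoints at time $t$ of all paths of speed at most $V_T$ that start in the initial disk and do not meet the sensor before time $t$. The sensor moving "with velocity $V_s$" means that its area-sweeping rate is at most the rate $2rV_s$ attained when the whole segment moves perpendicular to itself at speed $V_s$. The confinement task means preventing the evader region from expanding beyond its initial size, i.e. the sweeping must keep the area of the evader region from growing above the initial area $\pi R_0^2$. *)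

theory Defs
  imports "HOL-Analysis.Analysis"
begin

type_synonym point = "real^2"

definition outer_area_le :: "point set \<Rightarrow> real \<Rightarrow> bool" where
  "outer_area_le A c \<longleftrightarrow> (\<exists>S \<in> sets lebesgue. A \<subseteq> S \<and> emeasure lebesgue S \<le> ennreal c)"

definition sensor :: "(real \<Rightarrow> point) \<Rightarrow> (real \<Rightarrow> point) \<Rightarrow> real \<Rightarrow> point set" where
  "sensor a b t = closed_segment (a t) (b t)"

text \<open>Admissible sweeping process: continuous motion of a segment of length 2r whose
  area-sweeping rate is at most 2 r Vs, i.e. the area swept during any time interval
  [t1,t2] is at most 2 r Vs (t2 - t1).\<close>
definition admissible_sweeper ::
  "real \<Rightarrow> real \<Rightarrow> (real \<Rightarrow> point) \<Rightarrow> (real \<Rightarrow> point) \<Rightarrow> bool" where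
  "admissible_sweeper r Vs a b \<longleftrightarrow>
     continuous_on {0..} a \<and> continuous_on {0..} b \<and>
     (\<forall>t\<ge>0. dist (a t) (b t) = 2 * r) \<and>
     (\<forall>t1 t2. 0 \<le> t1 \<longrightarrow> t1 \<le> t2 \<longrightarrow>
        outer_area_le (\<Union>s\<in>{t1..t2}. sensor a b s) (2 * r * Vs * (t2 - t1)))"

definition evader_region ::
  "point \<Rightarrow> real \<Rightarrow> real \<Rightarrow> (real \<Rightarrow> point) \<Rightarrow> (real \<Rightarrow> point) \<Rightarrow> real \<Rightarrow> point set" where
  "evader_region x0 R0 VT a b t =
     {p t | p. p 0 \<in> cball x0 R0 \<and>
        (\<forall>s1\<in>{0..t}. \<forall>s2\<in>{0..t}. dist (p s1) (p s2) \<le> VT * \<bar>s1 - s2\<bar>) \<and>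
        (\<forall>s\<in>{0..t}. p s \<notin> sensor a b s)}"

definition confines ::
  "point \<Rightarrow> real \<Rightarrow> real \<Rightarrow> (real \<Rightarrow> point) \<Rightarrow> (real \<Rightarrow> point) \<Rightarrow> bool" where
  "confines x0 R0 VT a b \<longleftrightarrow>
     (\<forall>t\<ge>0. outer_area_le (evader_region x0 R0 VT a b t) (pi * R0^2))"

end

theory Submission
  imports Defs "HOL-Computational_Algebra.Polynomial"
begin


lemma finite_quad_roots:
  fixes A B C :: real assumes "A \<noteq> 0"
  shows "finite {u. A * u^2 + B * u + C = 0}"
proof -
  have "{u. A * u^2 + B * u + C = 0} = {u. poly [:C, B, A:] u = 0}"
    by (auto simp: power2_eq_square algebra_simps)
  moreover have "[:C, B, A:] \<noteq> 0" using assms by simp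
  ultimately show ?thesis using poly_roots_finite by metis
qed

lemma finite_sphere_segment:
  fixes x0 p q :: point assumes "p \<noteq> q"
  shows "finite (sphere x0 R \<inter> closed_segment p q)"
proof -
  define w where "w = p - x0"
  define d where "d = q - p"
  have dd: "d \<bullet> d \<noteq> 0" using assms by (simp add: d_def)
  have "sphere x0 R \<inter> closed_segment p q \<subseteq>
     (\<lambda>u. (1 - u) *\<^sub>R p + u *\<^sub>R q) ` {u. (d \<bullet> d) * u^2 + (2 * (w \<bullet> d)) * u + (w \<bullet> w - R^2) = 0}"
  proof
    fix z assume z: "z \<in> sphere x0 R \<inter> closed_segment p q"
    then obtain u where u: "z = (1 - u) *\<^sub>R p + u *\<^sub>R q" "0 \<le> u" "u \<le> 1"
      unfolding closed_segment_def by auto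
    have zx: "z - x0 = w + u *\<^sub>R d" unfolding u w_def d_def by (simp add: algebra_simps)
    have "norm (z - x0) = R" using z by (simp add: dist_norm norm_minus_commute)
    then have "(z - x0) \<bullet> (z - x0) = R^2" by (simp add: power2_norm_eq_inner[symmetric])
    then have "(d \<bullet> d) * u^2 + (2 * (w \<bullet> d)) * u + (w \<bullet> w - R^2) = 0"
      unfolding zx by (simp add: inner_add inner_scaleR inner_commute power2_eq_square algebra_simps)
    then show "z \<in> (\<lambda>u. (1 - u) *\<^sub>R p + u *\<^sub>R q) ` {u. (d \<bullet> d) * u^2 + (2 * (w \<bullet> d)) * u + (w \<bullet> w - R^2) = 0}"
      using u by auto
  qed
  then show ?thesis using finite_quad_roots[OF dd] finite_subset by blast
qed

lemma cone_open:
  fixes x0 :: point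
  shows "open {y. y \<noteq> x0 \<and> (\<exists>e\<in>E. dist (x0 + (R0 / norm (y - x0)) *\<^sub>R (y - x0)) e < \<delta>)}"
proof -
  define f where "f = (\<lambda>y::point. x0 + (R0 / norm (y - x0)) *\<^sub>R (y - x0))"
  have c: "continuous_on (-{x0}) f" unfolding f_def
    by (intro continuous_intros) auto
  have "{y. y \<noteq> x0 \<and> (\<exists>e\<in>E. dist (x0 + (R0 / norm (y - x0)) *\<^sub>R (y - x0)) e < \<delta>)}
        = (\<Union>e\<in>E. f -` ball e \<delta> \<inter> (-{x0}))"
    (is "?L = ?R") by (auto simp: f_def dist_commute)
  have o: "open (f -` ball e \<delta> \<inter> (-{x0}))" for e
    using c continuous_on_open_vimage[of "-{x0}" f] by auto
  have "open ?R" by (rule open_UN) (use o in blast)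
  then show ?thesis using \<open>?L = ?R\<close> by simp
qed

lemma line_negligible:
  fixes x0 d :: point assumes "d \<noteq> 0"
  shows "negligible {y. \<exists>k. y - x0 = k *\<^sub>R d}"
proof -
  define n :: point where "n = (\<chi> i. if i = 1 then - (d$2) else d$1)"
  have "n \<noteq> 0"
  proof
    assume "n = 0"
    then have "d$1 = 0" "d$2 = 0" unfolding n_def vec_eq_iff forall_2 by auto
    then have "d = 0" unfolding vec_eq_iff forall_2 by auto
    then show False using assms by simp
  qed
  have nd: "n \<bullet> d = 0" unfolding n_def inner_vec_def sum_2 by simp
  have "{y. \<exists>k. y - x0 = k *\<^sub>R d} \<subseteq> {y. n \<bullet> y = n \<bullet> x0}"
  proof
    fix y assume "y \<in> {y. \<exists>k. y - x0 = k *\<^sub>R d}"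
    then obtain k where "y - x0 = k *\<^sub>R d" by auto
    then have "n \<bullet> (y - x0) = 0" using nd by simp
    then show "y \<in> {y. n \<bullet> y = n \<bullet> x0}" by (simp add: inner_diff_right)
  qed
  moreover have "negligible {y. n \<bullet> y = n \<bullet> x0}" using negligible_hyperplane \<open>n \<noteq> 0\<close> by blast
  ultimately show ?thesis using negligible_subset by blast
qed

lemma proj_line:
  fixes x0 y e :: point assumes "y \<noteq> x0" "R0 > 0"
    and "x0 + (R0 / norm (y - x0)) *\<^sub>R (y - x0) = e"
  shows "y - x0 = (norm (y - x0) / R0) *\<^sub>R (e - x0)"
proof -
  have "e - x0 = (R0 / norm (y - x0)) *\<^sub>R (y - x0)" using assms(3) by auto
  then have "(norm (y - x0) / R0) *\<^sub>R (e - x0) = (norm (y - x0) / R0 * (R0 / norm (y - x0))) *\<^sub>R (y - x0)"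
    by simp
  also have "norm (y - x0) / R0 * (R0 / norm (y - x0)) = 1" using assms by simp
  finally show ?thesis by simp
qed



lemma min_lip: "\<bar>min (a::real) c - min b c\<bar> \<le> \<bar>a - b\<bar>"
  by (simp add: min_def abs_if)

lemma seg_close:
  fixes p q p0 q0 y :: point
  assumes "y \<in> closed_segment p q" "dist p p0 < e" "dist q q0 < e"
  shows "\<exists>y0\<in>closed_segment p0 q0. dist y y0 < e"
proof -
  obtain u where u: "y = (1 - u) *\<^sub>R p + u *\<^sub>R q" "0 \<le> u" "u \<le> 1"
    using assms(1) unfolding closed_segment_def by auto
  define y0 where "y0 = (1 - u) *\<^sub>R p0 + u *\<^sub>R q0"
  have y0: "y0 \<in> closed_segment p0 q0" unfolding y0_def closed_segment_def using u by auto
  have "y - y0 = (1 - u) *\<^sub>R (p - p0) + u *\<^sub>R (q - q0)"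
    unfolding u y0_def by (simp add: algebra_simps)
  then have "norm (y - y0) \<le> (1 - u) * norm (p - p0) + u * norm (q - q0)"
    using u norm_triangle_ineq[of "(1 - u) *\<^sub>R (p - p0)" "u *\<^sub>R (q - q0)"] by simp
  also have "\<dots> < (1 - u) * e + u * e"
  proof (cases "u = 0")
    case True then show ?thesis using assms by (simp add: dist_norm)
  next
    case False
    then have "u * norm (q - q0) < u * e" using u assms by (simp add: dist_norm)
    moreover have "(1 - u) * norm (p - p0) \<le> (1 - u) * e"
      using u assms by (intro mult_left_mono) (auto simp: dist_norm)
    ultimately show ?thesis by linarith
  qed
  also have "\<dots> = e" by (simp add: algebra_simps)
  finally show ?thesis using y0 by (auto simp: dist_norm)
qed

lemma proj_scale:
  fixes x0 y :: point assumes "R > 0" "y \<noteq> x0"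
  shows "x0 + (R0 / norm ((x0 + R *\<^sub>R (y - x0)) - x0)) *\<^sub>R ((x0 + R *\<^sub>R (y - x0)) - x0)
       = x0 + (R0 / norm (y - x0)) *\<^sub>R (y - x0)"
proof -
  have e1: "(x0 + R *\<^sub>R (y - x0)) - x0 = R *\<^sub>R (y - x0)" by simp
  have "norm ((x0 + R *\<^sub>R (y - x0)) - x0) = R * norm (y - x0)" using assms by simp
  moreover have "(R0 / (R * norm (y - x0))) *\<^sub>R (R *\<^sub>R (y - x0)) = (R0 / norm (y - x0)) *\<^sub>R (y - x0)"
    using assms by simp
  ultimately show ?thesis by (simp only: e1)
qed


lemma measure_cball2:
  fixes x0 :: point assumes "R \<ge> 0"
  shows "measure lebesgue (cball x0 R) = pi * R^2"
proof -
  have "measure lebesgue (cball x0 R) = measure lborel (cball x0 R)"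
    by simp
  also have "\<dots> = Henstock_Kurzweil_Integration.content (ball x0 R)"
    using content_cball_conv_ball by metis
  also have "\<dots> = R^2 * pi" using circle_area[OF assms] .
  finally show ?thesis by simp
qed

lemma scale_measure2:
  fixes x0 :: point and A :: "point set" assumes "R > 0"
  shows "measure lebesgue ((\<lambda>y. R *\<^sub>R y + (x0 - R *\<^sub>R x0)) ` A) = R^2 * measure lebesgue A"
  using measure_lebesgue_affine[of R "x0 - R *\<^sub>R x0" A] assms by simp

theorem theorem1:
  fixes R0 r VT Vs :: real and x0 :: point and a b :: "real \<Rightarrow> point"
  assumes "R0 > 0" and "r > 0" and "VT > 0" and "Vs > 0"
    and "Vs < pi * R0 * VT / r"
    and "admissible_sweeper r Vs a b"
  shows "\<not> confines x0 R0 VT a b"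
proof
  assume conf: "confines x0 R0 VT a b"
  have R0: "R0 > 0" and rpos: "r > 0" and VT: "VT > 0" and Vs: "Vs > 0" using assms by auto
  have ca: "continuous_on {0..} a" and cb: "continuous_on {0..} b"
    and len: "\<forall>t\<ge>0. dist (a t) (b t) = 2 * r"
    and sw: "\<forall>t1 t2. 0 \<le> t1 \<longrightarrow> t1 \<le> t2 \<longrightarrow>
        outer_area_le (\<Union>s\<in>{t1..t2}. sensor a b s) (2 * r * Vs * (t2 - t1))"
    using assms(6) unfolding admissible_sweeper_def by auto
  define S0 where "S0 = closed_segment (a 0) (b 0)"
  have ab0: "a 0 \<noteq> b 0" using len rpos by fastforce
  define E0 where "E0 = sphere x0 R0 \<inter> S0"
  have finE: "finite E0" unfolding E0_def S0_def using finite_sphere_segment[OF ab0] .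
  have E0ne: "e \<noteq> x0" if "e \<in> E0" for e using that R0 unfolding E0_def by auto
  define proj where "proj y = x0 + (R0 / norm (y - x0)) *\<^sub>R (y - x0)" for y
  define Cn where "Cn \<delta> = {y. y \<noteq> x0 \<and> (\<exists>e\<in>E0. dist (proj y) e < \<delta>)}" for \<delta>
  have Cn_open: "open (Cn \<delta>)" for \<delta> unfolding Cn_def proj_def by (rule cone_open)
  define A where "A n = Cn (1 / Suc n) \<inter> cball x0 1" for n :: nat
  have A_sets: "A n \<in> sets lebesgue" for n
    unfolding A_def using Cn_open by (intro sets.Int) auto
  have A_fin: "A n \<in> fmeasurable lebesgue" for n
    using A_sets by (rule fmeasurableI2[OF lmeasurable_cball, rotated]) (auto simp: A_def)
  have A_dec: "decseq A"
  proof (rule decseq_SucI)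
    fix n
    have "1 / real (Suc (Suc n)) \<le> 1 / Suc n" by (simp add: frac_le)
    then show "A (Suc n) \<subseteq> A n" unfolding A_def Cn_def by force
  qed
  have lim: "(\<lambda>n. measure lebesgue (A n)) \<longlonglongrightarrow> measure lebesgue (\<Inter>i. A i)"
  proof (rule Lim_measure_decseq)
    show "range A \<subseteq> sets lebesgue" using A_sets by auto
    show "decseq A" by (rule A_dec)
    show "emeasure lebesgue (A n) \<noteq> \<infinity>" for n
      using A_fin[of n] unfolding fmeasurable_def by auto
  qed
  have inter_sub: "(\<Inter>i. A i) \<subseteq> (\<Union>e\<in>E0. {y. \<exists>k. y - x0 = k *\<^sub>R (e - x0)})"
  proof
    fix y assume y: "y \<in> (\<Inter>i. A i)"
    then have yx: "y \<noteq> x0" and close: "\<forall>n. \<exists>e\<in>E0. dist (proj y) e < 1 / Suc n"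
      unfolding A_def Cn_def by auto
    have "\<exists>e\<in>E0. proj y = e"
    proof (rule ccontr)
      assume "\<not> ?thesis"
      then have pos: "\<forall>e\<in>E0. dist (proj y) e > 0" by auto
      from close obtain e0 where "e0 \<in> E0" by blast
      then have ne: "E0 \<noteq> {}" by auto
      define \<mu> where "\<mu> = Min ((\<lambda>e. dist (proj y) e) ` E0)"
      have mupos: "\<mu> > 0" unfolding \<mu>_def using finE ne pos by (subst Min_gr_iff) auto
      obtain n :: nat where n: "1 / Suc n < \<mu>"
      proof -
        obtain n :: nat where "inverse (real (Suc n)) < \<mu>" using reals_Archimedean[OF mupos] by blast
        then show ?thesis using that by (simp add: inverse_eq_divide)
      qed
      from close obtain e where e: "e \<in> E0" "dist (proj y) e < 1 / Suc n" by blast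
      have "\<mu> \<le> dist (proj y) e" unfolding \<mu>_def using finE e(1) by (intro Min_le) auto
      then show False using e n by linarith
    qed
    then obtain e where e: "e \<in> E0" "proj y = e" by blast
    have "y - x0 = (norm (y - x0) / R0) *\<^sub>R (e - x0)"
      using proj_line[OF yx R0] e unfolding proj_def by blast
    then show "y \<in> (\<Union>e\<in>E0. {y. \<exists>k. y - x0 = k *\<^sub>R (e - x0)})" using e by blast
  qed
  have "negligible (\<Union>e\<in>E0. {y. \<exists>k. y - x0 = k *\<^sub>R (e - x0)})"
    using finE E0ne line_negligible by (intro negligible_Union) auto
  then have "negligible (\<Inter>i. A i)" using inter_sub negligible_subset by blast
  then have "measure lebesgue (\<Inter>i. A i) = 0" by (rule negligible_imp_measure0)
  with lim have lim0: "(\<lambda>n. measure lebesgue (A n)) \<longlonglongrightarrow> 0" by simp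
  define gap where "gap = pi - r * Vs / (R0 * VT)"
  have "r * Vs < pi * R0 * VT" using assms(5) rpos by (simp add: field_simps)
  then have "r * Vs / (R0 * VT) < pi" using R0 VT by (simp add: field_simps)
  then have gap: "gap > 0" unfolding gap_def by simp
  obtain n0 where n0: "measure lebesgue (A n0) < gap"
    using LIMSEQ_D[OF lim0 gap] by auto
  define \<delta> where "\<delta> = 1 / real (Suc n0)"
  define m where "m = measure lebesgue (A n0)"
  have m0: "m \<ge> 0" unfolding m_def by simp
  have mgap: "m < gap" using n0 unfolding m_def .
  define K where "K = sphere x0 R0 - (\<Union>e\<in>E0. ball e \<delta>)"
  have "compact K" unfolding K_def by (intro compact_diff) auto
  moreover have "closed S0" unfolding S0_def by simp
  moreover have "K \<inter> S0 = {}"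
  proof -
    have "c \<notin> K" if "c \<in> S0" for c
    proof
      assume "c \<in> K"
      then have "c \<in> E0" using that unfolding K_def E0_def by auto
      moreover have "\<delta> > 0" unfolding \<delta>_def by simp
      ultimately show False using \<open>c \<in> K\<close> unfolding K_def by auto
    qed
    then show ?thesis by auto
  qed
  ultimately obtain \<eta> where \<eta>: "\<eta> > 0" "\<forall>c\<in>K. \<forall>y\<in>S0. \<eta> \<le> dist c y"
    using separate_compact_closed[of K S0] by blast
  have e3: "\<eta> / 3 > 0" using \<eta> by simp
  obtain da where da: "da > 0" "\<forall>s\<in>{0..}. dist s 0 < da \<longrightarrow> dist (a s) (a 0) < \<eta> / 3"
    using ca e3 unfolding continuous_on_iff by (metis atLeast_iff order_refl)
  obtain db where db: "db > 0" "\<forall>s\<in>{0..}. dist s 0 < db \<longrightarrow> dist (b s) (b 0) < \<eta> / 3"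
    using cb e3 unfolding continuous_on_iff by (metis atLeast_iff order_refl)
  define t where "t = min (min da db / 2) (\<eta> / (3 * VT))"
  have t0: "t > 0" unfolding t_def using da db \<eta> VT by simp
  have tda: "t < da" and tdb: "t < db" unfolding t_def using da db by auto
  have VTt: "VT * t \<le> \<eta> / 3" unfolding t_def using VT by (simp add: field_simps min_def)
  have hit: "\<exists>e\<in>E0. dist (x0 + R0 *\<^sub>R u) e < \<delta>"
    if s: "0 \<le> s" "s \<le> t" and u: "norm u = 1"
      and ins: "x0 + (R0 + VT * s) *\<^sub>R u \<in> sensor a b s" for s u
  proof -
    have "dist (a s) (a 0) < \<eta> / 3" using da(2) s tda by (auto simp: dist_real_def)
    moreover have "dist (b s) (b 0) < \<eta> / 3" using db(2) s tdb by (auto simp: dist_real_def)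
    ultimately obtain y0 where y0: "y0 \<in> S0" "dist (x0 + (R0 + VT * s) *\<^sub>R u) y0 < \<eta> / 3"
      using seg_close[of _ "a s" "b s"] ins unfolding sensor_def S0_def by blast
    have "dist (x0 + R0 *\<^sub>R u) (x0 + (R0 + VT * s) *\<^sub>R u) = VT * s"
      using u VT s by (simp add: dist_norm algebra_simps)
    also have "\<dots> \<le> \<eta> / 3" using VTt VT s by (meson mult_left_mono order_trans less_imp_le)
    finally have "dist (x0 + R0 *\<^sub>R u) y0 < \<eta>"
      using y0(2) \<eta>(1) dist_triangle[of "x0 + R0 *\<^sub>R u" y0 "x0 + (R0 + VT * s) *\<^sub>R u"] by linarith
    then have "x0 + R0 *\<^sub>R u \<notin> K" using \<eta>(2) y0(1) by force
    moreover have "x0 + R0 *\<^sub>R u \<in> sphere x0 R0" using u R0 by (simp add: dist_norm)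
    ultimately show ?thesis unfolding K_def by (auto simp: dist_commute)
  qed
  define R1 where "R1 = R0 + VT * t"
  have R01: "R0 < R1" unfolding R1_def using VT t0 by simp
  define W where "W = (\<Union>s\<in>{0..t}. sensor a b s)"
  obtain W' where W': "W' \<in> sets lebesgue" "W \<subseteq> W'" "emeasure lebesgue W' \<le> ennreal (2 * r * Vs * t)"
    using sw t0 unfolding outer_area_le_def W_def by (metis diff_zero order_refl less_imp_le)
  obtain S where S: "S \<in> sets lebesgue" "evader_region x0 R0 VT a b t \<subseteq> S"
      "emeasure lebesgue S \<le> ennreal (pi * R0^2)"
    using conf t0 unfolding confines_def outer_area_le_def by (meson less_imp_le)
  define D where "D = Cn \<delta> \<inter> cball x0 R1 - cball x0 R0"
  have cover: "cball x0 R1 \<subseteq> S \<union> W' \<union> D"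
  proof
    fix q assume q: "q \<in> cball x0 R1"
    show "q \<in> S \<union> W' \<union> D"
    proof (cases "q \<in> W")
      case True then show ?thesis using W' by auto
    next
      case qW: False
      have nots: "q \<notin> sensor a b s" if "s \<in> {0..t}" for s using qW that unfolding W_def by auto
      show ?thesis
      proof (cases "q \<in> cball x0 R0")
        case True
        have "q \<in> evader_region x0 R0 VT a b t"
          unfolding evader_region_def mem_Collect_eq
        proof (rule exI[of _ "\<lambda>_. q"], intro conjI ballI)
          show "q \<in> cball x0 R0" by (rule True)
          show "dist q q \<le> VT * \<bar>s1 - s2\<bar>" for s1 s2 using VT by simp
          show "q \<notin> sensor a b s" if "s \<in> {0..t}" for s using nots that by blast
        qed simp
        then show ?thesis using S by auto
      next
        case qout: False
        show ?thesis
        proof (cases "q \<in> Cn \<delta>")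
          case True then show ?thesis using q qout unfolding D_def by auto
        next
          case qC: False
          define \<rho> where "\<rho> = norm (q - x0)"
          have \<rho>: "R0 < \<rho>" "\<rho> \<le> R1" using q qout unfolding \<rho>_def by (auto simp: dist_norm norm_minus_commute)
          define u where "u = (1 / \<rho>) *\<^sub>R (q - x0)"
          have nu: "norm u = 1" unfolding u_def \<rho>_def using \<rho> R0 \<rho>_def by auto
          have qu: "q = x0 + \<rho> *\<^sub>R u" unfolding u_def using \<rho> R0 by auto
          have projq: "proj q = x0 + R0 *\<^sub>R u"
            unfolding proj_def u_def \<rho>_def[symmetric] by simp
          define p where "p s = x0 + min (R0 + VT * s) \<rho> *\<^sub>R u" for s
          have p0: "p 0 \<in> cball x0 R0" unfolding p_def using \<rho> nu R0 by (simp add: dist_norm)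
          have pt: "p t = q" unfolding p_def using \<rho> qu unfolding R1_def by simp
          have plip: "dist (p s1) (p s2) \<le> VT * \<bar>s1 - s2\<bar>" for s1 s2
          proof -
            have "dist (p s1) (p s2) = \<bar>min (R0 + VT * s1) \<rho> - min (R0 + VT * s2) \<rho>\<bar>"
              unfolding p_def dist_norm using nu by (simp add: scaleR_diff_left[symmetric])
            also have "\<dots> \<le> \<bar>(R0 + VT * s1) - (R0 + VT * s2)\<bar>" by (rule min_lip)
            also have "(R0 + VT * s1) - (R0 + VT * s2) = VT * (s1 - s2)" by (simp add: algebra_simps)
            also have "\<bar>VT * (s1 - s2)\<bar> = VT * \<bar>s1 - s2\<bar>" using VT by (simp add: abs_mult)
            finally show ?thesis .
          qed
          have pav: "p s \<notin> sensor a b s" if s: "s \<in> {0..t}" for s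
          proof (cases "\<rho> \<le> R0 + VT * s")
            case True
            then have "p s = q" unfolding p_def using qu by simp
            then show ?thesis using nots s by simp
          next
            case False
            then have ps: "p s = x0 + (R0 + VT * s) *\<^sub>R u" unfolding p_def by simp
            show ?thesis
            proof
              assume "p s \<in> sensor a b s"
              then obtain e where e: "e \<in> E0" "dist (x0 + R0 *\<^sub>R u) e < \<delta>"
                using hit[of s u] s nu ps by auto
              have qx: "q \<noteq> x0" using \<rho> R0 unfolding \<rho>_def by auto
              have "q \<in> Cn \<delta>" unfolding Cn_def using projq qx e by auto
              then show False using qC by simp
            qed
          qed
          have "q \<in> evader_region x0 R0 VT a b t"
            unfolding evader_region_def mem_Collect_eq
          proof (rule exI[of _ p], intro conjI ballI)
            show "q = p t" using pt by simp
          qed (use p0 plip pav in blast)+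
          then show ?thesis using S by auto
        qed
      qed
    qed
  qed
  have dpos: "\<delta> > 0" unfolding \<delta>_def by simp
  have An0: "A n0 = Cn \<delta> \<inter> cball x0 1" unfolding A_def \<delta>_def by simp
  have Cn_sets: "Cn \<delta> \<in> sets lebesgue" using Cn_open by auto
  have scale: "Cn \<delta> \<inter> cball x0 R = (\<lambda>y. R *\<^sub>R y + (x0 - R *\<^sub>R x0)) ` A n0" if R: "R > 0" for R
  proof
    show "(\<lambda>y. R *\<^sub>R y + (x0 - R *\<^sub>R x0)) ` A n0 \<subseteq> Cn \<delta> \<inter> cball x0 R"
    proof
      fix z assume "z \<in> (\<lambda>y. R *\<^sub>R y + (x0 - R *\<^sub>R x0)) ` A n0"
      then obtain y where y: "y \<in> A n0" and z: "z = x0 + R *\<^sub>R (y - x0)"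
        by (auto simp: algebra_simps)
      have yx: "y \<noteq> x0" and ye: "\<exists>e\<in>E0. dist (proj y) e < \<delta>" and y1: "norm (y - x0) \<le> 1"
        using y unfolding An0 Cn_def by (auto simp: dist_norm norm_minus_commute)
      have "proj z = proj y" unfolding proj_def z using proj_scale[OF R yx] by simp
      moreover have "z \<noteq> x0" using z yx R by simp
      moreover have "norm (z - x0) \<le> R" using z y1 R by (simp add: mult_left_le)
      ultimately show "z \<in> Cn \<delta> \<inter> cball x0 R" using ye unfolding Cn_def
        by (auto simp: dist_norm norm_minus_commute)
    qed
  next
    show "Cn \<delta> \<inter> cball x0 R \<subseteq> (\<lambda>y. R *\<^sub>R y + (x0 - R *\<^sub>R x0)) ` A n0"
    proof
      fix z assume z: "z \<in> Cn \<delta> \<inter> cball x0 R"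
      define y where "y = x0 + (1 / R) *\<^sub>R (z - x0)"
      have zx: "z \<noteq> x0" and ze: "\<exists>e\<in>E0. dist (proj z) e < \<delta>" and zR: "norm (z - x0) \<le> R"
        using z unfolding Cn_def by (auto simp: dist_norm norm_minus_commute)
      have "proj y = proj z" unfolding proj_def y_def using proj_scale[of "1 / R" z x0 R0] R zx by simp
      moreover have "y \<noteq> x0" using zx R unfolding y_def by simp
      moreover have "norm (y - x0) \<le> 1"
      proof -
        have "norm (y - x0) = norm (z - x0) / R" unfolding y_def using R by simp
        then show ?thesis using zR R by (simp add: divide_le_eq)
      qed
      ultimately have "y \<in> A n0" using ze unfolding An0 Cn_def
        by (auto simp: dist_norm norm_minus_commute)
      moreover have "z = R *\<^sub>R y + (x0 - R *\<^sub>R x0)" unfolding y_def using R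
        by (simp add: algebra_simps)
      ultimately show "z \<in> (\<lambda>y. R *\<^sub>R y + (x0 - R *\<^sub>R x0)) ` A n0" by blast
    qed
  qed
  have mscale: "measure lebesgue (Cn \<delta> \<inter> cball x0 R) = R^2 * m" if "R > 0" for R
    unfolding scale[OF that] m_def using scale_measure2[OF that] .
  have R0p: "R0 > 0" using R0 .
  have R1p: "R1 > 0" using R01 R0 by simp
  have B_fin: "cball x0 R \<in> fmeasurable lebesgue" for R by simp
  have CB1_sets: "Cn \<delta> \<inter> cball x0 R1 \<in> sets lebesgue" using Cn_sets by auto
  have CB0_sets: "Cn \<delta> \<inter> cball x0 R0 \<in> sets lebesgue" using Cn_sets by auto
  have CB1_fin: "Cn \<delta> \<inter> cball x0 R1 \<in> fmeasurable lebesgue"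
    using CB1_sets by (rule fmeasurableI2[OF B_fin, rotated]) auto
  have D_eq: "D = (Cn \<delta> \<inter> cball x0 R1) - (Cn \<delta> \<inter> cball x0 R0)" unfolding D_def by auto
  have D_sets: "D \<in> sets lebesgue" unfolding D_eq using CB1_sets CB0_sets by auto
  have mD: "measure lebesgue D = R1^2 * m - R0^2 * m"
    unfolding D_eq
    using CB1_fin CB0_sets R01 mscale[OF R1p] mscale[OF R0p]
    by (subst measure_Diff) (auto simp: fmeasurable_def)
  have S_fin: "S \<in> fmeasurable lebesgue" using S(1) S(3) by (intro fmeasurableI) (auto simp: top.not_eq_extremum intro: le_less_trans)
  have W_fin: "W' \<in> fmeasurable lebesgue" using W'(1) W'(3) by (intro fmeasurableI) (auto intro: le_less_trans)
  have D_fin: "D \<in> fmeasurable lebesgue" using D_sets by (rule fmeasurableI2[OF CB1_fin, rotated]) (auto simp: D_def)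
  have mS: "measure lebesgue S \<le> pi * R0^2"
  proof -
    have "ennreal (measure lebesgue S) \<le> ennreal (pi * R0^2)"
      using S(3) emeasure_eq_measure2[OF S_fin] by simp
    then show ?thesis using ennreal_le_iff[of "pi * R0^2"] by simp
  qed
  have mW: "measure lebesgue W' \<le> 2 * r * Vs * t"
  proof -
    have "ennreal (measure lebesgue W') \<le> ennreal (2 * r * Vs * t)"
      using W'(3) emeasure_eq_measure2[OF W_fin] by simp
    moreover have "0 \<le> 2 * r * Vs * t" using rpos Vs t0 by simp
    ultimately show ?thesis using ennreal_le_iff by blast
  qed
  have "measure lebesgue (cball x0 R1) \<le> measure lebesgue (S \<union> W' \<union> D)"
    using cover S_fin W_fin D_fin by (intro measure_mono_fmeasurable) auto
  also have "\<dots> \<le> measure lebesgue (S \<union> W') + measure lebesgue D"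
    using S(1) W'(1) D_sets by (intro measure_Un_le) auto
  also have "\<dots> \<le> measure lebesgue S + measure lebesgue W' + measure lebesgue D"
    using S(1) W'(1) measure_Un_le[of S lebesgue W'] by simp
  finally have ineq: "pi * R1^2 \<le> pi * R0^2 + 2 * r * Vs * t + (R1^2 * m - R0^2 * m)"
    using mS mW mD measure_cball2[of R1 x0] R1p by simp
  have diff: "R1^2 - R0^2 = t * (2 * R0 * VT + VT^2 * t)" unfolding R1_def by (simp add: power2_eq_square algebra_simps)
  have "(pi - m) * (R1^2 - R0^2) \<le> 2 * r * Vs * t" using ineq by (simp add: algebra_simps)
  then have "t * ((pi - m) * (2 * R0 * VT + VT^2 * t)) \<le> t * (2 * r * Vs)" unfolding diff
    by (simp add: algebra_simps)
  then have "(pi - m) * (2 * R0 * VT + VT^2 * t) \<le> 2 * r * Vs"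
    using t0 mult_le_cancel_left_pos by blast
  moreover have "(pi - m) * (2 * R0 * VT) \<le> (pi - m) * (2 * R0 * VT + VT^2 * t)"
  proof -
    have "r * Vs / (R0 * VT) > 0" using rpos Vs R0 VT by simp
    then have "m \<le> pi" using mgap unfolding gap_def by linarith
    moreover have "0 \<le> VT^2 * t" using t0 by simp
    ultimately show ?thesis by (intro mult_left_mono) auto
  qed
  moreover have "r * Vs / (R0 * VT) * (2 * R0 * VT) = 2 * r * Vs" using R0 VT by (simp add: field_simps)
  moreover have "r * Vs / (R0 * VT) * (2 * R0 * VT) < (pi - m) * (2 * R0 * VT)"
    using mgap R0 VT unfolding gap_def by (intro mult_strict_right_mono) auto
  ultimately show False by linarith
qed

end
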